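(* Let $\lambda\in\Lambda^+$ and let $M$ be a $\mathfrak g$-submodule of $\mathcal V(\lambda)$. For $\alpha\in\mathbb N^m$ and $\mu\subseteq[1,n]$ put $M_{\alpha,\mu}=\{v\in L^0(\lambda): x^\alpha y_\mu\otimes v\in M\}$ and $M^\flat=\bigcap_{\alpha,\mu}M_{\alpha,\mu}$. If $M^\flat\neq0$, then $M=\mathcal V(\lambda)$.
   Context: $\mathbb F$ algebraically closed of characteristic $0$, $m,n\ge1$. $\mathcal R=\mathbb F[x_1,\dots,x_m]\otimes\Lambda(y_1,\dots,y_n)$ ($x_i$ even, $y_s$ odd); $x^\alpha=\prod x_i^{\alpha_i}$, $y_\mu=y_{j_1}\cdots y_{j_r}$ for $\mu=\{j_1<\dots<j_r\}$. $\mathfrak g=W(m,n)$ the Lie superalgebra of superderivations of $\mathcal R$, free over $\mathcal R$ on $\partial_i$ (even) and $D_t$ (odd); $\mathfrak g_0\cong\mathfrak{gl}(m|n)$. $L^0(\lambda)$ is the finite-dimensional irreducible $\mathfrak g_0$-module of highest weight $\lambda\in\Lambda^+$ (dominant integral), representation $\xi$. $\mathcal V(\lambda)=\mathcal R\otimes L^0(\lambda)$ with action (homogeneous $f,g$): $f\partial_i.(g\otimes v)=f\partial_i(g)\otimes v+\sum_j\partial_j(f)g\otimes\xi(x_j\partial_i)v+(-1)^{\wp(f)+\wp(g)+1}\sum_jD_j(f)g\otimes\xi(y_j\partial_i)v$, $fD_i.(g\otimes v)=fD_i(g)\otimes v+(-1)^{\wp(g)}\sum_j\partial_j(f)g\otimes\xi(x_jD_i)v+(-1)^{\wp(f)+1}\sum_jD_j(f)g\otimes\xi(y_jD_i)v$.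 *)

theory Defs
  imports Main "HOL-Computational_Algebra.Polynomial"
begin

text \<open>Even variables x_0..x_(m-1), odd variables y_0..y_(n-1) (0-based).
A monomial x^alpha y_mu is a pair (alpha, mu) with alpha :: nat => nat, mu :: nat set.
The finite-dimensional super vector space L is F^d (vectors nat => 'a vanishing at k >= d),
with even part spanned by the coordinates k < d0 and odd part by d0 <= k < d.
gl(m|n) has basis z_a partial_b (a, b < m+n), where z_a = x_a (a < m), z_a = y_(a-m) (a >= m),
partial_b = d/dx_b (b < m), partial_b = D_(b-m) (b >= m). The representation xi assigns
to z_a partial_b the d x d matrix xi a b.\<close>

type_synonym mon = "(nat \<Rightarrow> nat) \<times> nat set"

definition alg_closed_field :: "'a::field itself \<Rightarrow> bool" where
  "alg_closed_field _ \<longleftrightarrow> (\<forall>p::'a poly. degree p \<ge> 1 \<longrightarrow> (\<exists>x. poly p x = 0))"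

definition valid_mon :: "nat \<Rightarrow> nat \<Rightarrow> mon \<Rightarrow> bool" where
  "valid_mon m n g \<longleftrightarrow> (\<forall>k\<ge>m. fst g k = 0) \<and> snd g \<subseteq> {..<n}"

definition mpar :: "mon \<Rightarrow> nat" where
  "mpar g = card (snd g)"

definition dx :: "nat \<Rightarrow> mon \<Rightarrow> 'a::field \<times> mon" where
  "dx i g = (of_nat (fst g i), ((fst g)(i := fst g i - 1), snd g))"

text \<open>D_t (x^alpha y_mu) = coefficient * monomial (odd left derivation)\<close>
definition dy :: "nat \<Rightarrow> mon \<Rightarrow> 'a::field \<times> mon" where
  "dy t g = ((if t \<in> snd g then (-1) ^ card {s\<in>snd g. s < t} else 0), (fst g, snd g - {t}))"

text \<open>product of two monomials in the supercommutative algebra R\<close>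
definition mmul :: "mon \<Rightarrow> mon \<Rightarrow> 'a::field \<times> mon" where
  "mmul f g = ((if snd f \<inter> snd g = {}
                then (-1) ^ card {(s,t). s \<in> snd f \<and> t \<in> snd g \<and> t < s} else 0),
               (\<lambda>k. fst f k + fst g k, snd f \<union> snd g))"

definition mulc :: "mon \<Rightarrow> 'a::field \<times> mon \<Rightarrow> 'a \<times> mon" where
  "mulc f cg = (fst cg * fst (mmul f (snd cg)), snd (mmul f (snd cg) :: 'a \<times> mon))"

definition cmulr :: "'a::field \<times> mon \<Rightarrow> mon \<Rightarrow> 'a \<times> mon" where
  "cmulr cf g = (fst cf * fst (mmul (snd cf) g), snd (mmul (snd cf) g :: 'a \<times> mon))"

text \<open>elements of V = R (x) L are functions mon => (nat => 'a), finitely supported\<close>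
definition ctens :: "'a::field \<times> mon \<Rightarrow> (nat \<Rightarrow> 'a) \<Rightarrow> mon \<Rightarrow> nat \<Rightarrow> 'a" where
  "ctens ch w h k = (if h = snd ch then fst ch * w k else 0)"

definition tens :: "mon \<Rightarrow> (nat \<Rightarrow> 'a::field) \<Rightarrow> mon \<Rightarrow> nat \<Rightarrow> 'a" where
  "tens g v = ctens (1, g) v"

definition mv :: "nat \<Rightarrow> (nat \<Rightarrow> nat \<Rightarrow> 'a::field) \<Rightarrow> (nat \<Rightarrow> 'a) \<Rightarrow> nat \<Rightarrow> 'a" where
  "mv d A v = (\<lambda>k. if k < d then (\<Sum>l<d. A k l * v l) else 0)"

definition Lcar :: "nat \<Rightarrow> (nat \<Rightarrow> 'a::field) set" where
  "Lcar d = {v. \<forall>k\<ge>d. v k = 0}"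

definition Vcar :: "nat \<Rightarrow> nat \<Rightarrow> nat \<Rightarrow> (mon \<Rightarrow> nat \<Rightarrow> 'a::field) set" where
  "Vcar m n d = {\<Phi>. finite {g. \<Phi> g \<noteq> (\<lambda>_. 0)}
                   \<and> (\<forall>g. \<Phi> g \<noteq> (\<lambda>_. 0) \<longrightarrow> valid_mon m n g)
                   \<and> (\<forall>g k. d \<le> k \<longrightarrow> \<Phi> g k = 0)}"

definition zpar :: "nat \<Rightarrow> nat \<Rightarrow> nat" where
  "zpar m a = (if a < m then 0 else 1)"

definition lpar :: "nat \<Rightarrow> nat \<Rightarrow> nat" where
  "lpar d0 k = (if k < d0 then 0 else 1)"

text \<open>action of the vector field (x^beta y_nu) partial_i on g (x) v (g a monomial)\<close>
definition actP :: "nat \<Rightarrow> nat \<Rightarrow> nat \<Rightarrow> (nat \<Rightarrow> nat \<Rightarrow> nat \<Rightarrow> nat \<Rightarrow> 'a::field)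
    \<Rightarrow> mon \<Rightarrow> nat \<Rightarrow> mon \<Rightarrow> (nat \<Rightarrow> 'a) \<Rightarrow> mon \<Rightarrow> nat \<Rightarrow> 'a" where
  "actP m n d \<xi> f i g v h k =
      ctens (mulc f (dx i g)) v h k
    + (\<Sum>j<m. ctens (cmulr (dx j f) g) (mv d (\<xi> j i) v) h k)
    + (-1) ^ (mpar f + mpar g + 1) *
        (\<Sum>j<n. ctens (cmulr (dy j f) g) (mv d (\<xi> (m + j) i) v) h k)"

text \<open>action of the vector field (x^beta y_nu) D_i on g (x) v (g a monomial)\<close>
definition actD :: "nat \<Rightarrow> nat \<Rightarrow> nat \<Rightarrow> (nat \<Rightarrow> nat \<Rightarrow> nat \<Rightarrow> nat \<Rightarrow> 'a::field)
    \<Rightarrow> mon \<Rightarrow> nat \<Rightarrow> mon \<Rightarrow> (nat \<Rightarrow> 'a) \<Rightarrow> mon \<Rightarrow> nat \<Rightarrow> 'a" where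
  "actD m n d \<xi> f i g v h k =
      ctens (mulc f (dy i g)) v h k
    + (-1) ^ (mpar g) *
        (\<Sum>j<m. ctens (cmulr (dx j f) g) (mv d (\<xi> j (m + i)) v) h k)
    + (-1) ^ (mpar f + 1) *
        (\<Sum>j<n. ctens (cmulr (dy j f) g) (mv d (\<xi> (m + j) (m + i)) v) h k)"

definition actPV :: "nat \<Rightarrow> nat \<Rightarrow> nat \<Rightarrow> (nat \<Rightarrow> nat \<Rightarrow> nat \<Rightarrow> nat \<Rightarrow> 'a::field)
    \<Rightarrow> mon \<Rightarrow> nat \<Rightarrow> (mon \<Rightarrow> nat \<Rightarrow> 'a) \<Rightarrow> mon \<Rightarrow> nat \<Rightarrow> 'a" where
  "actPV m n d \<xi> f i \<Phi> h k =
     (\<Sum>g\<in>{g. \<Phi> g \<noteq> (\<lambda>_. 0)}. actP m n d \<xi> f i g (\<Phi> g) h k)"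

definition actDV :: "nat \<Rightarrow> nat \<Rightarrow> nat \<Rightarrow> (nat \<Rightarrow> nat \<Rightarrow> nat \<Rightarrow> nat \<Rightarrow> 'a::field)
    \<Rightarrow> mon \<Rightarrow> nat \<Rightarrow> (mon \<Rightarrow> nat \<Rightarrow> 'a) \<Rightarrow> mon \<Rightarrow> nat \<Rightarrow> 'a" where
  "actDV m n d \<xi> f i \<Phi> h k =
     (\<Sum>g\<in>{g. \<Phi> g \<noteq> (\<lambda>_. 0)}. actD m n d \<xi> f i g (\<Phi> g) h k)"

definition is_glmn_rep :: "nat \<Rightarrow> nat \<Rightarrow> nat \<Rightarrow> nat \<Rightarrow> (nat \<Rightarrow> nat \<Rightarrow> nat \<Rightarrow> nat \<Rightarrow> 'a::field) \<Rightarrow> bool" where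
  "is_glmn_rep m n d0 d \<xi> \<longleftrightarrow> d0 \<le> d
    \<and> (\<forall>a b k l. a < m + n \<longrightarrow> b < m + n \<longrightarrow> k < d \<longrightarrow> l < d \<longrightarrow> \<xi> a b k l \<noteq> 0 \<longrightarrow>
          even (zpar m a + zpar m b + lpar d0 k + lpar d0 l))
    \<and> (\<forall>a b c e v. a < m + n \<longrightarrow> b < m + n \<longrightarrow> c < m + n \<longrightarrow> e < m + n \<longrightarrow> v \<in> Lcar d \<longrightarrow>
          (let s = (-1) ^ ((zpar m a + zpar m b) * (zpar m c + zpar m e)) in
           (\<forall>k. mv d (\<xi> a b) (mv d (\<xi> c e) v) k - s * mv d (\<xi> c e) (mv d (\<xi> a b) v) k
              = (if b = c then mv d (\<xi> a e) v k else 0)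
                - s * (if e = a then mv d (\<xi> c b) v k else 0))))"

definition is_irreducible :: "nat \<Rightarrow> nat \<Rightarrow> nat \<Rightarrow> nat \<Rightarrow> (nat \<Rightarrow> nat \<Rightarrow> nat \<Rightarrow> nat \<Rightarrow> 'a::field) \<Rightarrow> bool" where
  "is_irreducible m n d0 d \<xi> \<longleftrightarrow> 0 < d \<and>
    (\<forall>U. U \<subseteq> Lcar d
       \<longrightarrow> (\<lambda>_. 0) \<in> U
       \<longrightarrow> (\<forall>u\<in>U. \<forall>w\<in>U. (\<lambda>k. u k + w k) \<in> U)
       \<longrightarrow> (\<forall>c. \<forall>u\<in>U. (\<lambda>k. c * u k) \<in> U)
       \<longrightarrow> (\<forall>u\<in>U. (\<lambda>k. if k < d0 then u k else 0) \<in> U)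
       \<longrightarrow> (\<forall>a b. \<forall>u\<in>U. a < m + n \<longrightarrow> b < m + n \<longrightarrow> mv d (\<xi> a b) u \<in> U)
       \<longrightarrow> U = {\<lambda>_. 0} \<or> U = Lcar d)"

text \<open>M is a g-submodule (graded subspace stable under all x^beta y_nu partial_i, x^beta y_nu D_i,
  which span W(m,n))\<close>
definition is_Wsubmodule :: "nat \<Rightarrow> nat \<Rightarrow> nat \<Rightarrow> nat \<Rightarrow> (nat \<Rightarrow> nat \<Rightarrow> nat \<Rightarrow> nat \<Rightarrow> 'a::field)
    \<Rightarrow> (mon \<Rightarrow> nat \<Rightarrow> 'a) set \<Rightarrow> bool" where
  "is_Wsubmodule m n d0 d \<xi> M \<longleftrightarrow> M \<subseteq> Vcar m n d
    \<and> (\<lambda>_ _. 0) \<in> M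
    \<and> (\<forall>\<Phi>\<in>M. \<forall>\<Psi>\<in>M. (\<lambda>g k. \<Phi> g k + \<Psi> g k) \<in> M)
    \<and> (\<forall>c. \<forall>\<Phi>\<in>M. (\<lambda>g k. c * \<Phi> g k) \<in> M)
    \<and> (\<forall>\<Phi>\<in>M. (\<lambda>g k. if even (mpar g + lpar d0 k) then \<Phi> g k else 0) \<in> M)
    \<and> (\<forall>f i. \<forall>\<Phi>\<in>M. valid_mon m n f \<longrightarrow> i < m \<longrightarrow> actPV m n d \<xi> f i \<Phi> \<in> M)
    \<and> (\<forall>f i. \<forall>\<Phi>\<in>M. valid_mon m n f \<longrightarrow> i < n \<longrightarrow> actDV m n d \<xi> f i \<Phi> \<in> M)"

definition Mflat :: "nat \<Rightarrow> nat \<Rightarrow> nat \<Rightarrow> (mon \<Rightarrow> nat \<Rightarrow> 'a::field) set \<Rightarrow> (nat \<Rightarrow> 'a) set" where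
  "Mflat m n d M = {v \<in> Lcar d. \<forall>g. valid_mon m n g \<longrightarrow> tens g v \<in> M}"

end

theory Submission
  imports Defs
begin


lemma tens_eq: "tens g v h k = (if h = g then v k else 0)"
  by (simp add: tens_def ctens_def)

lemma ctens_eq: "ctens c v h k = fst c * tens (snd c) v h k"
  by (cases c) (simp add: tens_def ctens_def)

context
  fixes m n d0 d :: nat and \<xi> :: "nat \<Rightarrow> nat \<Rightarrow> nat \<Rightarrow> nat \<Rightarrow> 'a::field" and M
  assumes W: "is_Wsubmodule m n d0 d \<xi> M"
begin

lemma M_add: "\<Phi> \<in> M \<Longrightarrow> \<Psi> \<in> M \<Longrightarrow> (\<lambda>g k. \<Phi> g k + \<Psi> g k) \<in> M"
  using W unfolding is_Wsubmodule_def by blast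
lemma M_smult: "\<Phi> \<in> M \<Longrightarrow> (\<lambda>g k. c * \<Phi> g k) \<in> M"
  using W unfolding is_Wsubmodule_def by blast
lemma M_zero: "(\<lambda>_ _. 0) \<in> M"
  using W unfolding is_Wsubmodule_def by blast
lemma M_sub: "\<Phi> \<in> M \<Longrightarrow> \<Psi> \<in> M \<Longrightarrow> (\<lambda>g k. \<Phi> g k - \<Psi> g k) \<in> M"
proof -
  assume a: "\<Phi> \<in> M" "\<Psi> \<in> M"
  have "(\<lambda>g k. (-1) * \<Psi> g k) \<in> M" using M_smult a by blast
  from M_add[OF a(1) this] show ?thesis by simp
qed
lemma M_unsign: "(\<lambda>g k. s * \<Phi> g k) \<in> M \<Longrightarrow> s * s = 1 \<Longrightarrow> \<Phi> \<in> M"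
proof -
  assume a: "(\<lambda>g k. s * \<Phi> g k) \<in> M" "s * s = 1"
  from M_smult[OF a(1), of s] have "(\<lambda>g k. (s * s) * \<Phi> g k) \<in> M" by (simp add: mult.assoc)
  thus ?thesis using a(2) by simp
qed

lemma valid_mmul: "valid_mon m n f \<Longrightarrow> valid_mon m n g \<Longrightarrow> valid_mon m n (snd (mmul f g :: 'a \<times> mon))"
  by (auto simp: valid_mon_def mmul_def)
lemma valid_dx: "valid_mon m n g \<Longrightarrow> valid_mon m n (snd (dx i g :: 'a \<times> mon))"
  by (auto simp: valid_mon_def dx_def)
lemma valid_dy: "valid_mon m n g \<Longrightarrow> valid_mon m n (snd (dy i g :: 'a \<times> mon))"
  by (auto simp: valid_mon_def dy_def)

lemma flat_tens: "v \<in> Mflat m n d M \<Longrightarrow> valid_mon m n g \<Longrightarrow> tens g v \<in> M"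
  unfolding Mflat_def by blast

lemma flat_ctens: "v \<in> Mflat m n d M \<Longrightarrow> valid_mon m n (snd c) \<Longrightarrow> (\<lambda>h k. ctens c v h k) \<in> M"
  unfolding ctens_eq using M_smult[OF flat_tens] by blast

lemma actPV_tens:
  assumes "v \<noteq> (\<lambda>_. 0)"
  shows "actPV m n d \<xi> f i (tens g v) = (\<lambda>h k. actP m n d \<xi> f i g v h k)"
proof -
  have "{g'. tens g v g' \<noteq> (\<lambda>_. 0)} = {g}" using assms by (auto simp: tens_eq fun_eq_iff)
  moreover have "tens g v g = v" by (simp add: tens_eq fun_eq_iff)
  ultimately show ?thesis by (intro ext) (simp only: actPV_def, simp)
qed
lemma actDV_tens:
  assumes "v \<noteq> (\<lambda>_. 0)"
  shows "actDV m n d \<xi> f i (tens g v) = (\<lambda>h k. actD m n d \<xi> f i g v h k)"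
proof -
  have "{g'. tens g v g' \<noteq> (\<lambda>_. 0)} = {g}" using assms by (auto simp: tens_eq fun_eq_iff)
  moreover have "tens g v g = v" by (simp add: tens_eq fun_eq_iff)
  ultimately show ?thesis by (intro ext) (simp only: actDV_def, simp)
qed

lemma key_P:
  assumes v: "v \<in> Mflat m n d M" and f: "valid_mon m n f" and g: "valid_mon m n g" and i: "i < m"
  shows "(\<lambda>h k. (\<Sum>j<m. ctens (cmulr (dx j f) g) (mv d (\<xi> j i) v) h k)
    + (-1) ^ (mpar f + mpar g + 1) *
        (\<Sum>j<n. ctens (cmulr (dy j f) g) (mv d (\<xi> (m + j) i) v) h k)) \<in> M"
proof (cases "v = (\<lambda>_. 0)")
  case True
  have "mv d A (\<lambda>_. 0) = (\<lambda>_. (0::'a))" for A by (simp add: mv_def fun_eq_iff)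
  have "(\<lambda>h k. ctens c (mv d A v) h k) = (\<lambda>_ _. 0)" for c A using True by (simp add: ctens_def mv_def fun_eq_iff)
  then show ?thesis using M_zero by simp
next
  case False
  have A: "(\<lambda>h k. actP m n d \<xi> f i g v h k) \<in> M"
    using W f i flat_tens[OF v g] actPV_tens[OF False] unfolding is_Wsubmodule_def by metis
  have T: "(\<lambda>h k. ctens (mulc f (dx i g)) v h k) \<in> M"
    apply (rule flat_ctens[OF v])
    using valid_mmul[OF f valid_dx[OF g]] by (simp add: mulc_def)
  from M_sub[OF A T] show ?thesis by (simp add: actP_def)
qed

lemma key_D:
  assumes v: "v \<in> Mflat m n d M" and f: "valid_mon m n f" and g: "valid_mon m n g" and i: "i < n"
  shows "(\<lambda>h k. (-1) ^ (mpar g) *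
        (\<Sum>j<m. ctens (cmulr (dx j f) g) (mv d (\<xi> j (m + i)) v) h k)
    + (-1) ^ (mpar f + 1) *
        (\<Sum>j<n. ctens (cmulr (dy j f) g) (mv d (\<xi> (m + j) (m + i)) v) h k)) \<in> M"
proof (cases "v = (\<lambda>_. 0)")
  case True
  have "mv d A (\<lambda>_. 0) = (\<lambda>_. (0::'a))" for A by (simp add: mv_def fun_eq_iff)
  have "(\<lambda>h k. ctens c (mv d A v) h k) = (\<lambda>_ _. 0)" for c A using True by (simp add: ctens_def mv_def fun_eq_iff)
  then show ?thesis using M_zero by simp
next
  case False
  have A: "(\<lambda>h k. actD m n d \<xi> f i g v h k) \<in> M"
    using W f i flat_tens[OF v g] actDV_tens[OF False] unfolding is_Wsubmodule_def by metis
  have T: "(\<lambda>h k. ctens (mulc f (dy i g)) v h k) \<in> M"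
    apply (rule flat_ctens[OF v])
    using valid_mmul[OF f valid_dy[OF g]] by (simp add: mulc_def)
  from M_sub[OF A T] show ?thesis by (simp add: actD_def)
qed

end


definition ex :: "nat \<Rightarrow> mon" where "ex j = ((\<lambda>k. if k = j then 1 else 0), {})"
definition ey :: "nat \<Rightarrow> mon" where "ey j = ((\<lambda>_. 0), {j})"

lemma mmul_one: "(mmul ((\<lambda>_. 0), {}) g :: 'a::field \<times> mon) = (1, g)"
  by (cases g) (simp add: mmul_def)

lemma sum_x_ex: "j < m \<Longrightarrow> (\<Sum>j'<m. ctens (cmulr (dx j' (ex j)) g) (w j') h k) = tens g (w j) h (k::nat) * (1::'a::field)"
proof -
  assume j: "j < m"
  have "ctens (cmulr (dx j' (ex j)) g) (w j') h k = (if j' = j then tens g (w j) h k else (0::'a))" for j'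
  proof (cases "j' = j")
    case True
    have "(fst (ex j))(j := fst (ex j) j - 1) = (\<lambda>_. 0)" by (auto simp: ex_def)
    then show ?thesis using True by (simp add: ctens_eq dx_def cmulr_def ex_def mmul_one)
  qed (simp add: ctens_eq dx_def cmulr_def ex_def)
  then show ?thesis using j by simp
qed

lemma sum_y_ex: "(\<Sum>j'<n. ctens (cmulr (dy j' (ex j)) g) (w j') h k) = (0::'a::field)"
  by (simp add: ctens_eq dy_def cmulr_def ex_def)

lemma sum_x_ey: "(\<Sum>j'<m. ctens (cmulr (dx j' (ey j)) g) (w j') h k) = (0::'a::field)"
  by (simp add: ctens_eq dx_def cmulr_def ey_def)

lemma sum_y_ey: "j < n \<Longrightarrow> (\<Sum>j'<n. ctens (cmulr (dy j' (ey j)) g) (w j') h k) = tens g (w j) h (k::nat) * (1::'a::field)"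
proof -
  assume j: "j < n"
  have "ctens (cmulr (dy j' (ey j)) g) (w j') h k = (if j' = j then tens g (w j) h k else (0::'a))" for j'
  proof (cases "j' = j")
    case True
    have "{s. s = j \<and> s < (j::nat)} = {}" by auto
    hence c: "(-1::'a) ^ card {s. s = j \<and> s < (j::nat)} = 1" by (simp only: card.empty power_0)
    show ?thesis using True apply (simp add: ctens_eq dy_def cmulr_def ey_def mmul_one)
      using c by blast
  qed (simp add: ctens_eq dy_def cmulr_def ey_def)
  then show ?thesis using j by simp
qed

lemma valid_ex: "j < m \<Longrightarrow> valid_mon m n (ex j)" by (simp add: valid_mon_def ex_def)
lemma valid_ey: "j < n \<Longrightarrow> valid_mon m n (ey j)" by (simp add: valid_mon_def ey_def)
lemma mpar_ex: "mpar (ex j) = 0" by (simp add: mpar_def ex_def)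
lemma mpar_ey: "mpar (ey j) = 1" by (simp add: mpar_def ey_def)

lemma sign_sq: "((-1::'a::field) ^ k) * ((-1) ^ k) = 1"
  by (simp add: power_add[symmetric])

lemma flat_xi:
  fixes \<xi> :: "nat \<Rightarrow> nat \<Rightarrow> nat \<Rightarrow> nat \<Rightarrow> 'a::field"
  assumes W: "is_Wsubmodule m n d0 d \<xi> M" and v: "v \<in> Mflat m n d M"
    and g: "valid_mon m n g" and a: "a < m + n" and b: "b < m + n"
  shows "tens g (mv d (\<xi> a b) v) \<in> M"
proof (cases "b < m")
  case bm: True
  show ?thesis
  proof (cases "a < m")
    case True
    from key_P[OF W v valid_ex[OF True] g bm]
    show ?thesis using True by (simp add: sum_x_ex sum_y_ex)
  next
    case False
    then obtain j where j: "a = m + j" "j < n" using a by (metis add_diff_inverse_nat add_less_cancel_left)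
    from key_P[OF W v valid_ey[OF j(2)] g bm]
    have "(\<lambda>h k. (-1) ^ (1 + mpar g + 1) * tens g (mv d (\<xi> a b) v) h k) \<in> M"
      using j by (simp add: sum_x_ey sum_y_ey mpar_ey)
    then show ?thesis by (rule M_unsign[OF W]) (rule sign_sq)
  qed
next
  case False
  then obtain i where i: "b = m + i" "i < n" using b by (metis add_diff_inverse_nat add_less_cancel_left)
  show ?thesis
  proof (cases "a < m")
    case True
    from key_D[OF W v valid_ex[OF True] g i(2)]
    have "(\<lambda>h k. (-1) ^ (mpar g) * tens g (mv d (\<xi> a b) v) h k) \<in> M"
      using True i by (simp add: sum_x_ex sum_y_ex)
    then show ?thesis by (rule M_unsign[OF W]) (rule sign_sq)
  next
    case False
    then obtain j where j: "a = m + j" "j < n" using a by (metis add_diff_inverse_nat add_less_cancel_left)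
    from key_D[OF W v valid_ey[OF j(2)] g i(2)]
    show ?thesis using i j by (simp add: sum_x_ey sum_y_ey mpar_ey)
  qed
qed



theorem mainTheorem3:
  fixes m n d0 d :: nat
    and \<xi> :: "nat \<Rightarrow> nat \<Rightarrow> nat \<Rightarrow> nat \<Rightarrow> 'a::field_char_0"
    and M :: "(mon \<Rightarrow> nat \<Rightarrow> 'a) set"
  assumes "alg_closed_field TYPE('a)"
    and "1 \<le> m" and "1 \<le> n"
    and "is_glmn_rep m n d0 d \<xi>"
    and "is_irreducible m n d0 d \<xi>"
    and "is_Wsubmodule m n d0 d \<xi> M"
    and "Mflat m n d M \<noteq> {\<lambda>_. 0}"
  shows "M = Vcar m n d"
proof -
  note W = assms(6)
  define U where "U = Mflat m n d M"
  have UL: "U \<subseteq> Lcar d" by (auto simp: U_def Mflat_def)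
  have U0: "(\<lambda>_. 0) \<in> U"
  proof -
    have "tens g (\<lambda>_. 0) = (\<lambda>_ _. (0::'a))" for g by (simp add: tens_eq fun_eq_iff)
    then show ?thesis using M_zero[OF W] by (simp add: U_def Mflat_def Lcar_def)
  qed
  have Uadd: "\<forall>u\<in>U. \<forall>w\<in>U. (\<lambda>k. u k + w k) \<in> U"
  proof (intro ballI)
    fix u w assume u: "u \<in> U" and w: "w \<in> U"
    have "tens g (\<lambda>k. u k + w k) = (\<lambda>h k. tens g u h k + tens g w h k)" for g
      by (simp add: tens_eq fun_eq_iff)
    then show "(\<lambda>k. u k + w k) \<in> U" using u w M_add[OF W]
      by (simp add: U_def Mflat_def Lcar_def)
  qed
  have Usm: "\<forall>c. \<forall>u\<in>U. (\<lambda>k. c * u k) \<in> U"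
  proof (intro allI ballI)
    fix c u assume u: "u \<in> U"
    have "tens g (\<lambda>k. c * u k) = (\<lambda>h k. c * tens g u h k)" for g
      by (simp add: tens_eq fun_eq_iff)
    then show "(\<lambda>k. c * u k) \<in> U" using u M_smult[OF W]
      by (simp add: U_def Mflat_def Lcar_def)
  qed
  have Uev: "\<forall>u\<in>U. (\<lambda>k. if k < d0 then u k else 0) \<in> U"
  proof (intro ballI)
    fix u assume u: "u \<in> U"
    define ue where "ue = (\<lambda>k. if k < d0 then u k else 0)"
    define uo where "uo = (\<lambda>k. if k < d0 then 0 else u k)"
    have "tens g ue \<in> M" if g: "valid_mon m n g" for g
    proof -
      have tu: "tens g u \<in> M" using u g flat_tens[OF W] by (simp add: U_def)
      have P: "(\<lambda>h k. if even (mpar h + lpar d0 k) then tens g u h k else 0) \<in> M"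
        using W tu unfolding is_Wsubmodule_def by blast
      show ?thesis
      proof (cases "even (mpar g)")
        case True
        have "(\<lambda>h k. if even (mpar h + lpar d0 k) then tens g u h k else 0) = tens g ue"
          using True by (auto simp: fun_eq_iff tens_eq ue_def lpar_def)
        then show ?thesis using P by simp
      next
        case False
        have "(\<lambda>h k. if even (mpar h + lpar d0 k) then tens g u h k else 0) = tens g uo"
          using False by (auto simp: fun_eq_iff tens_eq uo_def lpar_def)
        moreover have "tens g ue = (\<lambda>h k. tens g u h k - tens g uo h k)"
          by (auto simp: fun_eq_iff tens_eq ue_def uo_def)
        ultimately show ?thesis using M_sub[OF W tu] P by simp
      qed
    qed
    moreover have "ue \<in> Lcar d" using u UL by (auto simp: ue_def Lcar_def)
    ultimately show "(\<lambda>k. if k < d0 then u k else 0) \<in> U"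
      by (simp add: U_def Mflat_def ue_def)
  qed
  have Uxi: "\<forall>a b. \<forall>u\<in>U. a < m + n \<longrightarrow> b < m + n \<longrightarrow> mv d (\<xi> a b) u \<in> U"
  proof (intro allI ballI impI)
    fix a b u assume u: "u \<in> U" and a: "a < m + n" and b: "b < m + n"
    have "mv d (\<xi> a b) u \<in> Lcar d" by (simp add: mv_def Lcar_def)
    moreover have "tens g (mv d (\<xi> a b) u) \<in> M" if "valid_mon m n g" for g
      using flat_xi[OF W _ that a b] u by (simp add: U_def)
    ultimately show "mv d (\<xi> a b) u \<in> U" by (simp add: U_def Mflat_def)
  qed
  have "U = {\<lambda>_. 0} \<or> U = Lcar d"
    using assms(5) UL U0 Uadd Usm Uev Uxi unfolding is_irreducible_def by blast
  hence UL2: "U = Lcar d" using assms(7) by (simp add: U_def)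
  have MV: "M \<subseteq> Vcar m n d" using W by (simp add: is_Wsubmodule_def)
  have "\<Phi> \<in> M" if P: "\<Phi> \<in> Vcar m n d" for \<Phi>
  proof -
    define S where "S = {g. \<Phi> g \<noteq> (\<lambda>_. 0)}"
    have fS: "finite S" using P by (simp add: Vcar_def S_def)
    have vS: "\<And>g. g \<in> S \<Longrightarrow> valid_mon m n g" using P unfolding Vcar_def S_def by blast
    have LS: "\<And>g. \<Phi> g \<in> Lcar d" using P unfolding Vcar_def Lcar_def by blast
    have "T \<subseteq> S \<Longrightarrow> (\<lambda>h k. \<Sum>g\<in>T. tens g (\<Phi> g) h k) \<in> M" if "finite T" for T
      using that
    proof (induction T rule: finite_induct)
      case empty
      then show ?case using M_zero[OF W] by simp
    next
      case (insert x F)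
      have "\<Phi> x \<in> U" using UL2 LS by simp
      hence t: "tens x (\<Phi> x) \<in> M" using flat_tens[OF W] vS insert(4) by (simp add: U_def)
      have "(\<lambda>h k. tens x (\<Phi> x) h k + (\<Sum>g\<in>F. tens g (\<Phi> g) h k)) \<in> M"
        using M_add[OF W t] insert by simp
      then show ?case using insert by simp
    qed
    from this[OF fS] have "(\<lambda>h k. \<Sum>g\<in>S. tens g (\<Phi> g) h k) \<in> M" by simp
    moreover have "(\<lambda>h k. \<Sum>g\<in>S. tens g (\<Phi> g) h k) = \<Phi>"
    proof (intro ext)
      fix h k
      have "(\<Sum>g\<in>S. tens g (\<Phi> g) h k) = (\<Sum>g\<in>S. if h = g then \<Phi> g k else 0)"
        by (simp add: tens_eq)
      also have "\<dots> = (if h \<in> S then \<Phi> h k else 0)" using fS by (simp add: sum.delta)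
      also have "\<dots> = \<Phi> h k" by (auto simp: S_def)
      finally show "(\<Sum>g\<in>S. tens g (\<Phi> g) h k) = \<Phi> h k" .
    qed
    ultimately show ?thesis by simp
  qed
  then show ?thesis using MV by blast
qed

end
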